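(* Let $S\subseteq X$, let $\psi:S\to Z$ be $C$-convex, $x_0\in S$, and let $f=\psi^C$. Assume $C$ is polyhedral and that for every $x\in X$ and every $z^*\in C^-\setminus\{0\}$ the function $t\mapsto\varphi_{f,z^*}(x_0+t(x-x_0))$ (for $t\in[0,1]$, $+\infty$ otherwise) is lower semicontinuous at $t=0$. Then $x_0$ solves the set-valued Minty inequality for $f$, i.e. for all $x\in X$ with $f(x)\ne f(x_0)$ one has $f'(x,x_0-x)\not\subseteq 0^+f(x)$, if and only if $\psi(x_0)\in\operatorname{Eff}\psi[S]$.
   Context: $X$ is a real linear space, $Z$ a real locally convex Hausdorff space with dual $Z^*$, $C\subseteq Z$ a closed convex cone with $0\in C$ and $C^-=\{z^*\in Z^*: z^*(c)\le0\ \forall c\in C\}$, $C^-\setminus\{0\}\ne\emptyset$. $C$ is polyhedral if $C=\bigcap_{i=1}^n\{z: 0\le -m_i^*(z)\}$ for finitely many $m_i^*\in Z^*$. $\psi:S\to Z$ is $C$-convex if $S$ is convex and $(1-t)\psi(x_1)+t\psi(x_2)\in\psi(x_1+t(x_2-x_1))+C$ for all $x_1,x_2\in S$, $t\in(0,1)$. $f=\psi^C:X\to 2^Z$ is $f(x)=\psi(x)+C$ for $x\in S$ and $f(x)=\emptyset$ otherwise. $\psi(x_0)\in\operatorname{Eff}\psi[S]$ means: for all $y\in\psi[S]$, $\psi(x_0)\in y+C$ implies $\psi(x_0)\in y+(C\cap -C)$. For $A,B\subseteq Z$: $A\ominus B=\{z: B+\{z\}\subseteq A\}$; $0^+A=\{z:A+\{z\}\subseteq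 A\}$ for $A\neq\emptyset$, $0^+\emptyset=\emptyset$. $f'(x,u)=\bigcap_{t_0>0}\operatorname{cl}\operatorname{co}\bigcup_{0<t<t_0}\frac1t\big(f(x+tu)\ominus f(x)\big)$. $\varphi_{f,z^*}(x)=\inf\{-z^*(z): z\in f(x)\}$, i.e. $-z^*(\psi(x))$ on $S$ and $+\infty$ outside $S$. *)

theory Defs
  imports "HOL-Analysis.Analysis"
begin

definition locally_convex_tvs :: "('z::{real_vector, t2_space}) itself \<Rightarrow> bool" where
  "locally_convex_tvs _ \<longleftrightarrow>
     continuous_on UNIV (\<lambda>p::'z \<times> 'z. fst p + snd p) \<and>
     continuous_on UNIV (\<lambda>p::real \<times> 'z. scaleR (fst p) (snd p)) \<and>
     (\<forall>U::'z set. open U \<and> 0 \<in> U \<longrightarrow> (\<exists>V. open V \<and> convex V \<and> 0 \<in> V \<and> V \<subseteq> U))"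

definition dual_space :: "('z::{real_vector, topological_space} \<Rightarrow> real) set" where
  "dual_space = {g. linear g \<and> continuous_on UNIV g}"

definition polar_cone :: "('z::{real_vector, topological_space}) set \<Rightarrow> ('z \<Rightarrow> real) set" where
  "polar_cone C = {g \<in> dual_space. \<forall>c\<in>C. g c \<le> 0}"

definition polyhedral_cone :: "('z::{real_vector, topological_space}) set \<Rightarrow> bool" where
  "polyhedral_cone C \<longleftrightarrow> (\<exists>M. finite M \<and> M \<subseteq> dual_space \<and> C = (\<Inter>m\<in>M. {z. 0 \<le> - m z}))"

definition C_convex :: "('z::real_vector) set \<Rightarrow> ('x::real_vector) set \<Rightarrow> ('x \<Rightarrow> 'z) \<Rightarrow> bool" where
  "C_convex C S \<psi> \<longleftrightarrow> convex S \<and>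
     (\<forall>x1\<in>S. \<forall>x2\<in>S. \<forall>t::real. 0 < t \<and> t < 1 \<longrightarrow>
        (1 - t) *\<^sub>R \<psi> x1 + t *\<^sub>R \<psi> x2 \<in> (\<lambda>c. \<psi> (x1 + t *\<^sub>R (x2 - x1)) + c) ` C)"

definition setext :: "('z::real_vector) set \<Rightarrow> ('x::real_vector) set \<Rightarrow> ('x \<Rightarrow> 'z) \<Rightarrow> 'x \<Rightarrow> 'z set" where
  "setext C S \<psi> x = (if x \<in> S then (\<lambda>c. \<psi> x + c) ` C else {})"

definition set_ominus :: "('z::real_vector) set \<Rightarrow> 'z set \<Rightarrow> 'z set" where
  "set_ominus A B = {z. (\<lambda>b. b + z) ` B \<subseteq> A}"

definition recession :: "('z::real_vector) set \<Rightarrow> 'z set" where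
  "recession A = (if A = {} then {} else {z. (\<lambda>a. a + z) ` A \<subseteq> A})"

definition dir_deriv :: "('x::real_vector \<Rightarrow> ('z::{real_vector, topological_space}) set) \<Rightarrow> 'x \<Rightarrow> 'x \<Rightarrow> 'z set" where
  "dir_deriv f x u = (\<Inter>t0\<in>{t0::real. 0 < t0}.
      closure (convex hull (\<Union>t\<in>{t. 0 < t \<and> t < t0}.
         (\<lambda>z. (1 / t) *\<^sub>R z) ` set_ominus (f (x + t *\<^sub>R u)) (f x))))"

definition scalarization :: "('x \<Rightarrow> ('z::real_vector) set) \<Rightarrow> ('z \<Rightarrow> real) \<Rightarrow> 'x \<Rightarrow> ereal" where
  "scalarization f zs x = Inf ((\<lambda>z. ereal (- zs z)) ` f x)"

definition Eff_point :: "('z::real_vector) set \<Rightarrow> 'z \<Rightarrow> 'z set \<Rightarrow> bool" where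
  "Eff_point C y0 A \<longleftrightarrow> (\<forall>y\<in>A. y0 \<in> (\<lambda>c. y + c) ` C \<longrightarrow> y0 \<in> (\<lambda>c. y + c) ` (C \<inter> uminus ` C))"

definition minty_solution :: "('x::real_vector \<Rightarrow> ('z::{real_vector, topological_space}) set) \<Rightarrow> 'x \<Rightarrow> bool" where
  "minty_solution f x0 \<longleftrightarrow> (\<forall>x. f x \<noteq> f x0 \<longrightarrow> \<not> (dir_deriv f x (x0 - x) \<subseteq> recession (f x)))"

end

theory Submission
  imports Defs
begin

definition concave01 :: "(real \<Rightarrow> real) \<Rightarrow> bool" where
 "concave01 h \<longleftrightarrow> (\<forall>a b l. 0\<le>a \<longrightarrow> a\<le>1 \<longrightarrow> 0\<le>b \<longrightarrow> b\<le>1 \<longrightarrow> 0<l \<longrightarrow> l<1 \<longrightarrow>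
     (1-l)*h a + l*h b \<le> h ((1-l)*a + l*b))"

definition upp :: "(real \<Rightarrow> real) \<Rightarrow> real \<Rightarrow> bool" where
 "upp h s \<longleftrightarrow> (\<forall>r. s<r \<and> r\<le>1 \<longrightarrow> h r \<le> h s)"

lemma conc_ge1:
  assumes c: "concave01 h" and h10: "h 1 \<le> h 0" and s: "0\<le>s" "s\<le>1"
  shows "h 1 \<le> h s"
proof (cases "s = 0 \<or> s = 1")
  case True then show ?thesis using h10 by auto
next
  case False
  then have t: "0<s" "s<1" using s by auto
  have "(1-s)*h 0 + s*h 1 \<le> h ((1-s)*0 + s*1)"
    using c t unfolding concave01_def by (metis order.refl zero_le_one)
  moreover have "(1-s)*h 1 \<le> (1-s)*h 0" using h10 t by (intro mult_left_mono) auto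
  ultimately show ?thesis by (simp add: algebra_simps)
qed

lemma upp_mono:
  assumes c: "concave01 h" and u: "upp h s" and ss: "0\<le>s" "s\<le>t" "t<1"
  shows "upp h t"
proof (cases "s = t")
  case True then show ?thesis using u by simp
next
  case False
  show ?thesis unfolding upp_def
  proof (intro allI impI)
    fix r assume r: "t<r \<and> r\<le>1"
    define l where "l = (t-s)/(r-s)"
    have l: "0<l" "l<1" using False ss r unfolding l_def by (auto simp: field_simps)
    have "l*(r-s) = t-s" using False ss r unfolding l_def by auto
    then have eq: "(1-l) * s + l*r = t" by (simp add: algebra_simps)
    have "(1-l)*h s + l*h r \<le> h ((1-l) * s + l*r)"
      using c ss r l unfolding concave01_def by auto
    moreover have "h r \<le> h s" using u r ss unfolding upp_def by auto
    moreover have "(1-l)*h r \<le> (1-l)*h s" using l \<open>h r \<le> h s\<close> by (intro mult_left_mono) auto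
    ultimately show "h r \<le> h t" using eq by (simp add: algebra_simps)
  qed
qed

lemma upp_exists:
  assumes c: "concave01 h" and h10: "h 1 \<le> h 0"
    and usc: "\<And>e. e>0 \<Longrightarrow> \<exists>d>0. \<forall>r. 1-d<r \<and> r<1 \<longrightarrow> h r < h 1 + e"
  shows "\<exists>s. 0\<le>s \<and> s<1 \<and> upp h s"
proof (rule ccontr)
  assume na: "\<not> ?thesis"
  have inc: "h s < h t" if "0\<le>s" "s<t" "t<1" for s t
  proof -
    from na that obtain r where r: "t<r" "r\<le>1" "h r > h t" unfolding upp_def by force
    show ?thesis
    proof (rule ccontr)
      assume "\<not> h s < h t" then have hs: "h t \<le> h s" by simp
      define l where "l = (t-s)/(r-s)"
      have l: "0<l" "l<1" using that r unfolding l_def by (auto simp: field_simps)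
      have "l*(r-s) = t-s" using that r unfolding l_def by auto
      then have eq: "(1-l) * s + l*r = t" by (simp add: algebra_simps)
      have "(1-l)*h s + l*h r \<le> h ((1-l) * s + l*r)"
        using c that r l unfolding concave01_def by auto
      moreover have "(1-l)*h t \<le> (1-l)*h s" using l hs by (intro mult_left_mono) auto
      moreover have "l*h t < l*h r" using l r by simp
      ultimately show False using eq by (simp add: algebra_simps)
    qed
  qed
  have "h 0 < h (1/2)" using inc[of 0 "1/2"] by simp
  then obtain d where d: "d>0" "\<forall>r. 1-d<r \<and> r<1 \<longrightarrow> h r < h 1 + (h (1/2) - h 0)"
    using usc[of "h (1/2) - h 0"] by auto
  define r where "r = max (3/4) (1 - d/2)"
  have r: "1-d<r" "r<1" "1/2 < r" using d unfolding r_def by (auto simp: max_def)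
  have "h r < h 1 + (h (1/2) - h 0)" using d r by auto
  moreover have "h (1/2) < h r" using inc[of "1/2" r] r by simp
  ultimately show False using h10 by simp
qed

lemma upp_zero:
  assumes c: "concave01 h" and h10: "h 1 \<le> h 0" and s: "0\<le>s" "s<1" and u: "upp h s"
    and hs: "h s = h 1"
  shows "upp h 0"
  unfolding upp_def
proof (intro allI impI)
  fix r :: real assume r: "0<r \<and> r\<le>1"
  show "h r \<le> h 0"
  proof (cases "s \<le> r")
    case True
    then have "h r \<le> h s" using u r by (cases "s = r") (auto simp: upp_def)
    then show ?thesis using hs h10 by simp
  next
    case False
    show ?thesis
    proof (rule ccontr)
      assume "\<not> h r \<le> h 0" then have hr: "h r > h 1" using h10 by simp
      define l where "l = (s-r)/(1-r)"
      have l: "0<l" "l<1" using False s r unfolding l_def by (auto simp: field_simps)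
      have "l*(1-r) = s-r" using r False s unfolding l_def by auto
      then have eq: "(1-l)*r + l*1 = s" by (simp add: algebra_simps)
      have "(1-l)*h r + l*h 1 \<le> h ((1-l)*r + l*1)"
        using c r l unfolding concave01_def by (metis order.refl zero_le_one less_imp_le)
      moreover have "(1-l)*h 1 < (1-l)*h r" using l hr by simp
      ultimately show False using eq hs by (simp add: algebra_simps)
    qed
  qed
qed


lemma cc_add:
  assumes "convex C" "cone C" "a \<in> C" "b \<in> C" shows "a + b \<in> C"
  using assms convex_cone by blast

lemma scal_eq:
  assumes "y \<in> S" "m \<in> polar_cone C" "0 \<in> C"
  shows "scalarization (setext C S \<psi>) m y = ereal (- m (\<psi> y))"
proof -
  have lin: "linear m" using assms(2) unfolding polar_cone_def dual_space_def by auto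
  have le: "m c \<le> 0" if "c \<in> C" for c using assms(2) that unfolding polar_cone_def by auto
  have "scalarization (setext C S \<psi>) m y = (INF c\<in>C. ereal (- m (\<psi> y + c)))"
    unfolding scalarization_def setext_def using assms(1) by (simp add: image_image)
  also have "\<dots> = ereal (- m (\<psi> y))"
  proof (rule antisym)
    show "(INF x\<in>C. ereal (- m (\<psi> y + x))) \<le> ereal (- m (\<psi> y))"
      using assms(3) by (intro INF_lower2[of 0]) (auto simp: linear_0[OF lin])
    show "ereal (- m (\<psi> y)) \<le> (INF x\<in>C. ereal (- m (\<psi> y + x)))"
      using le by (intro INF_greatest) (simp add: linear_add[OF lin])
  qed
  finally show ?thesis .
qed

theorem mainTheorem5:
  fixes C :: "('z::{real_vector, t2_space}) set"
    and S :: "('x::real_vector) set"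
    and \<psi> :: "'x \<Rightarrow> 'z"
    and x0 :: 'x
  assumes lcs: "locally_convex_tvs TYPE('z)"
    and C_closed: "closed C" and C_convex: "convex C" and C_cone: "cone C" and C_0: "0 \<in> C"
    and polar_nontriv: "\<exists>zs\<in>polar_cone C. zs \<noteq> (\<lambda>_. 0)"
    and C_poly: "polyhedral_cone C"
    and psi_conv: "C_convex C S \<psi>"
    and x0S: "x0 \<in> S"
    and lsc: "\<And>x zs. zs \<in> polar_cone C \<Longrightarrow> zs \<noteq> (\<lambda>_. 0) \<Longrightarrow>
        (let g = (\<lambda>t::real. if 0 \<le> t \<and> t \<le> 1
                      then scalarization (setext C S \<psi>) zs (x0 + t *\<^sub>R (x - x0)) else \<infinity>)
         in g 0 \<le> Liminf (at 0) g)"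
  shows "minty_solution (setext C S \<psi>) x0 \<longleftrightarrow> Eff_point C (\<psi> x0) (\<psi> ` S)"
proof
  define f where "f = setext C S \<psi>"
  have fS: "f y = (\<lambda>c. \<psi> y + c) ` C" if "y \<in> S" for y using that unfolding f_def setext_def by simp
  have convS: "convex S" using psi_conv unfolding C_convex_def by simp
  have Cadd: "a + b \<in> C" if "a \<in> C" "b \<in> C" for a b using cc_add[OF C_convex C_cone that] .
  have segS: "a + t *\<^sub>R (b - a) \<in> S" if "a \<in> S" "b \<in> S" "0 \<le> t" "t \<le> 1" for a b t
  proof -
    have "(1 - t) *\<^sub>R a + t *\<^sub>R b \<in> S" using convS that unfolding convex_alt by blast
    moreover have "(1 - t) *\<^sub>R a + t *\<^sub>R b = a + t *\<^sub>R (b - a)" by (simp add: algebra_simps)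
    ultimately show ?thesis by simp
  qed
  have psiC: "\<exists>c\<in>C. (1 - t) *\<^sub>R \<psi> a + t *\<^sub>R \<psi> b = \<psi> (a + t *\<^sub>R (b - a)) + c"
    if "a \<in> S" "b \<in> S" "0 < t" "t < 1" for a b t
    using psi_conv that unfolding C_convex_def by blast
  {
    assume eff: "Eff_point C (\<psi> x0) (\<psi> ` S)"
    show "minty_solution (setext C S \<psi>) x0"
      unfolding minty_solution_def f_def[symmetric]
    proof (intro allI impI)
      fix x assume ne: "f x \<noteq> f x0"
      show "\<not> dir_deriv f x (x0 - x) \<subseteq> recession (f x)"
      proof (cases "x \<in> S")
        case False
        then have fx: "f x = {}" unfolding f_def setext_def by simp
        have "0 \<in> dir_deriv f x (x0 - x)"
          unfolding dir_deriv_def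
        proof (intro InterI, clarsimp)
          fix t0 :: real assume t0: "0 < t0"
          have "(0::'z) \<in> (\<Union>t\<in>{t. 0 < t \<and> t < t0}. (\<lambda>z. (1 / t) *\<^sub>R z) ` set_ominus (f (x + t *\<^sub>R (x0 - x))) (f x))"
            using t0 by (intro UN_I[of "t0/2"]) (auto simp: set_ominus_def fx)
          then show "0 \<in> closure (convex hull (\<Union>t\<in>{t. 0 < t \<and> t < t0}. (\<lambda>z. (1 / t) *\<^sub>R z) ` set_ominus (f (x + t *\<^sub>R (x0 - x))) (f x)))"
            by (meson closure_subset hull_inc subsetD)
        qed
        then show ?thesis by (auto simp: fx recession_def)
      next
        case True
        define d where "d = \<psi> x0 - \<psi> x"
        have "d \<in> dir_deriv f x (x0 - x)"
          unfolding dir_deriv_def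
        proof (intro InterI, clarsimp)
          fix t0 :: real assume t0: "0 < t0"
          define t where "t = min t0 1 / 2"
          have t: "0 < t" "t < t0" "t < 1" using t0 unfolding t_def by auto
          obtain c0 where c0: "c0 \<in> C" "(1 - t) *\<^sub>R \<psi> x + t *\<^sub>R \<psi> x0 = \<psi> (x + t *\<^sub>R (x0 - x)) + c0"
            using psiC[OF True x0S t(1) t(3)] by blast
          have xtS: "x + t *\<^sub>R (x0 - x) \<in> S" using segS[OF True x0S] t by simp
          have "t *\<^sub>R d \<in> set_ominus (f (x + t *\<^sub>R (x0 - x))) (f x)"
            unfolding set_ominus_def fS[OF True] fS[OF xtS]
          proof clarsimp
            fix c assume c: "c \<in> C"
            have "\<psi> x + c + t *\<^sub>R d = ((1 - t) *\<^sub>R \<psi> x + t *\<^sub>R \<psi> x0) + c"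
              unfolding d_def by (simp add: algebra_simps)
            also have "\<dots> = \<psi> (x + t *\<^sub>R (x0 - x)) + (c0 + c)" using c0 by (simp add: algebra_simps)
            finally show "\<psi> x + c + t *\<^sub>R d \<in> (+) (\<psi> (x + t *\<^sub>R (x0 - x))) ` C"
              using Cadd[OF c0(1) c] by blast
          qed
          moreover have "d = (1 / t) *\<^sub>R (t *\<^sub>R d)" using t by simp
          ultimately have "d \<in> (\<Union>t\<in>{t. 0 < t \<and> t < t0}. (\<lambda>z. (1 / t) *\<^sub>R z) ` set_ominus (f (x + t *\<^sub>R (x0 - x))) (f x))"
            using t by blast
          then show "d \<in> closure (convex hull (\<Union>t\<in>{t. 0 < t \<and> t < t0}. (\<lambda>z. (1 / t) *\<^sub>R z) ` set_ominus (f (x + t *\<^sub>R (x0 - x))) (f x)))"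
            by (meson closure_subset hull_inc subsetD)
        qed
        moreover have "d \<notin> recession (f x)"
        proof
          assume "d \<in> recession (f x)"
          moreover have "\<psi> x \<in> f x" using C_0 fS[OF True] by force
          ultimately have "\<psi> x + d \<in> f x" unfolding recession_def
            by (auto split: if_splits)
          then have "\<psi> x0 \<in> (\<lambda>c. \<psi> x + c) ` C" using fS[OF True] unfolding d_def by simp
          then have "\<psi> x0 \<in> (\<lambda>c. \<psi> x + c) ` (C \<inter> uminus ` C)"
            using eff True unfolding Eff_point_def by blast
          then obtain c2 where c2: "c2 \<in> C" "- c2 \<in> C" "\<psi> x0 = \<psi> x + c2" by force
          have "f x = f x0" unfolding fS[OF True] fS[OF x0S]
          proof (intro equalityI subsetI)
            fix y assume "y \<in> (+) (\<psi> x) ` C"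
            then obtain c where c: "c \<in> C" "y = \<psi> x + c" by blast
            then have "y = \<psi> x0 + (- c2 + c)" using c2 by (simp add: algebra_simps)
            then show "y \<in> (+) (\<psi> x0) ` C" using Cadd[OF c2(2) c(1)] by blast
          next
            fix y assume "y \<in> (+) (\<psi> x0) ` C"
            then obtain c where c: "c \<in> C" "y = \<psi> x0 + c" by blast
            then have "y = \<psi> x + (c2 + c)" using c2 by (simp add: algebra_simps)
            then show "y \<in> (+) (\<psi> x) ` C" using Cadd[OF c2(1) c(1)] by blast
          qed
          then show False using ne by simp
        qed
        ultimately show ?thesis by blast
      qed
    qed
  }
  {
    assume minty: "minty_solution (setext C S \<psi>) x0"
    show "Eff_point C (\<psi> x0) (\<psi> ` S)"
      unfolding Eff_point_def
    proof (rule ccontr)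
      assume "\<not> (\<forall>y\<in>\<psi> ` S. \<psi> x0 \<in> (+) y ` C \<longrightarrow> \<psi> x0 \<in> (+) y ` (C \<inter> uminus ` C))"
      then obtain x c where xS: "x \<in> S" and c: "c \<in> C" "\<psi> x0 = \<psi> x + c"
        and nE: "\<psi> x0 \<notin> (+) (\<psi> x) ` (C \<inter> uminus ` C)" by blast
      obtain M where M: "finite M" "M \<subseteq> dual_space" "C = (\<Inter>m\<in>M. {z. 0 \<le> - m z})"
        using C_poly unfolding polyhedral_cone_def by blast
      have memC: "z \<in> C \<longleftrightarrow> (\<forall>m\<in>M. m z \<le> 0)" for z using M(3) by auto
      have lin: "linear m" if "m \<in> M" for m using M(2) that unfolding dual_space_def by auto
      have polar: "m \<in> polar_cone C" if "m \<in> M" for m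
        using M(2) that memC unfolding polar_cone_def by auto
      have "- c \<notin> C"
      proof
        assume "- c \<in> C"
        then have "c \<in> C \<inter> uminus ` C" using c(1) by (metis IntI image_eqI minus_minus)
        then show False using nE c(2) by blast
      qed
      then obtain j where j: "j \<in> M" "j c < 0"
        using memC linear_neg[OF lin] by force
      define xr where "xr r = x + r *\<^sub>R (x0 - x)" for r :: real
      define hm where "hm m r = m (\<psi> (xr r))" for m :: "'z \<Rightarrow> real" and r
      have xrS: "xr r \<in> S" if "0 \<le> r" "r \<le> 1" for r using segS[OF xS x0S that] unfolding xr_def .
      have xr0: "xr 0 = x" and xr1: "xr 1 = x0" unfolding xr_def by simp_all
      have h1: "hm m 1 = hm m 0 + m c" if "m \<in> M" for m
        unfolding hm_def xr0 xr1 c(2) using linear_add[OF lin[OF that]] by simp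
      have h10: "hm m 1 \<le> hm m 0" if "m \<in> M" for m using h1[OF that] memC c(1) that by force
      have conc: "concave01 (hm m)" if m: "m \<in> M" for m
        unfolding concave01_def
      proof (intro allI impI)
        fix a b l :: real assume ab: "0 \<le> a" "a \<le> 1" "0 \<le> b" "b \<le> 1" "0 < l" "l < 1"
        obtain c' where c': "c' \<in> C"
          "(1 - l) *\<^sub>R \<psi> (xr a) + l *\<^sub>R \<psi> (xr b) = \<psi> (xr a + l *\<^sub>R (xr b - xr a)) + c'"
          using psiC[OF xrS[OF ab(1,2)] xrS[OF ab(3,4)] ab(5,6)] by blast
        have eq: "xr a + l *\<^sub>R (xr b - xr a) = xr ((1 - l) * a + l * b)"
          unfolding xr_def by (simp add: algebra_simps)
        have "m ((1 - l) *\<^sub>R \<psi> (xr a) + l *\<^sub>R \<psi> (xr b)) = m (\<psi> (xr ((1 - l) * a + l * b)) + c')"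
          using c'(2) eq by simp
        then have "(1 - l) * hm m a + l * hm m b = hm m ((1 - l) * a + l * b) + m c'"
          unfolding hm_def using linear_add[OF lin[OF m]] linear_scale[OF lin[OF m]] by simp
        moreover have "m c' \<le> 0" using c'(1) memC m by blast
        ultimately show "(1 - l) * hm m a + l * hm m b \<le> hm m ((1 - l) * a + l * b)" by simp
      qed
      have usc: "\<exists>d>0. \<forall>r. 1 - d < r \<and> r < 1 \<longrightarrow> hm m r < hm m 1 + e"
        if m: "m \<in> M" and mnz: "m \<noteq> (\<lambda>_. 0)" and e: "e > 0" for m e
      proof -
        define g where "g = (\<lambda>t::real. if 0 \<le> t \<and> t \<le> 1
                      then scalarization (setext C S \<psi>) m (x0 + t *\<^sub>R (x - x0)) else \<infinity>)"
        have lim: "g 0 \<le> Liminf (at 0) g" using lsc[OF polar[OF m] mnz, of x] unfolding g_def Let_def .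
        have g0: "g 0 = ereal (- m (\<psi> x0))"
          unfolding g_def using scal_eq[OF x0S polar[OF m] C_0] by simp
        have all: "\<forall>y<g 0. eventually (\<lambda>t. y < g t) (at 0)"
          using le_Liminf_iff[THEN iffD1, OF lim] .
        have "ereal (- m (\<psi> x0) - e) < g 0" using g0 e by simp
        then have "eventually (\<lambda>t. ereal (- m (\<psi> x0) - e) < g t) (at 0)"
          using all by blast
        then obtain d where d: "d > 0" "\<forall>t. t \<noteq> 0 \<and> dist t 0 < d \<longrightarrow> ereal (- m (\<psi> x0) - e) < g t"
          unfolding eventually_at by auto
        show ?thesis
        proof (intro exI[of _ "min d 1"] conjI allI impI)
          show "0 < min d 1" using d by simp
          fix r assume r: "1 - min d 1 < r \<and> r < 1"
          define t where "t = 1 - r"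
          have t: "0 < t" "t < d" "t \<le> 1" using r unfolding t_def by auto
          have xeq: "x0 + t *\<^sub>R (x - x0) = xr r" unfolding xr_def t_def by (simp add: algebra_simps)
          have "ereal (- m (\<psi> x0) - e) < g t" using d t by auto
          also have "g t = ereal (- m (\<psi> (xr r)))"
            unfolding g_def using t xeq scal_eq[OF xrS polar[OF m] C_0] r by auto
          finally show "hm m r < hm m 1 + e" unfolding hm_def xr1 by simp
        qed
      qed
      have "\<forall>m\<in>M. \<exists>s. 0 \<le> s \<and> s < 1 \<and> upp (hm m) s"
      proof
        fix m assume m: "m \<in> M"
        show "\<exists>s. 0 \<le> s \<and> s < 1 \<and> upp (hm m) s"
        proof (cases "m = (\<lambda>_. 0)")
          case True
          then show ?thesis by (intro exI[of _ 0]) (simp add: upp_def hm_def)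
        next
          case False
          show ?thesis using upp_exists[OF conc[OF m] h10[OF m] usc[OF m False]] .
        qed
      qed
      then obtain sf where sf: "\<forall>m\<in>M. 0 \<le> sf m \<and> sf m < 1 \<and> upp (hm m) (sf m)"
        by metis
      define s1 where "s1 = Max (insert 0 (sf ` M))"
      have s1in: "s1 \<in> insert 0 (sf ` M)" unfolding s1_def using M(1) by (intro Max_in) auto
      have s1: "0 \<le> s1" "s1 < 1" using s1in sf unfolding s1_def using M(1) by auto
      have s1u: "upp (hm m) s1" if m: "m \<in> M" for m
      proof -
        have "sf m \<le> s1" unfolding s1_def using M(1) m by (intro Max_ge) auto
        then show ?thesis using upp_mono[OF conc[OF m]] sf m s1 by blast
      qed
      obtain s where s: "0 \<le> s" "s < 1" "\<forall>m\<in>M. upp (hm m) s" and si: "\<exists>i\<in>M. hm i s > hm i 1"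
      proof (cases "\<exists>i\<in>M. hm i s1 > hm i 1")
        case True then show ?thesis using that s1 s1u by blast
      next
        case False
        then have "\<forall>m\<in>M. hm m s1 = hm m 1"
          using conc_ge1[OF conc h10] s1 by (metis antisym less_imp_le not_less)
        then have "\<forall>m\<in>M. upp (hm m) 0" using upp_zero[OF conc h10] s1 s1u by blast
        moreover have "hm j 0 > hm j 1" using h1[OF j(1)] j(2) by simp
        ultimately show ?thesis using that j(1) by force
      qed
      define x' where "x' = xr s"
      have x'S: "x' \<in> S" unfolding x'_def using xrS s by simp
      have ne: "f x' \<noteq> f x0"
      proof
        assume eq: "f x' = f x0"
        have "\<psi> x' \<in> f x'" using fS[OF x'S] C_0 by force
        then obtain c' where c': "c' \<in> C" "\<psi> x' = \<psi> x0 + c'" using eq fS[OF x0S] by auto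
        obtain i where i: "i \<in> M" "hm i s > hm i 1" using si by blast
        have "hm i s = hm i 1 + i c'" unfolding hm_def xr1 using c'(2) linear_add[OF lin[OF i(1)]]
          unfolding x'_def by simp
        moreover have "i c' \<le> 0" using memC c' i by blast
        ultimately show False using i by simp
      qed
      have "dir_deriv f x' (x0 - x') \<subseteq> recession (f x')"
      proof -
        define U where "U = (\<Union>t\<in>{t. 0 < t \<and> t < 1}. (\<lambda>z. (1 / t) *\<^sub>R z) ` set_ominus (f (x' + t *\<^sub>R (x0 - x'))) (f x'))"
        have "dir_deriv f x' (x0 - x') \<subseteq> closure (convex hull U)"
          unfolding dir_deriv_def U_def by (intro Inter_lower) auto
        moreover have "U \<subseteq> C"
        proof
          fix w assume "w \<in> U"
          then obtain t z where t: "0 < t" "t < 1" and z: "z \<in> set_ominus (f (x' + t *\<^sub>R (x0 - x'))) (f x')"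
            and w: "w = (1 / t) *\<^sub>R z" unfolding U_def by blast
          define r where "r = s + t * (1 - s)"
          have r: "s < r" "r \<le> 1" "0 \<le> r" proof -
            have "0 < t * (1 - s)" using s t by simp
            moreover have "0 \<le> (1 - t) * (1 - s)" using s t by simp
            ultimately show "s < r" "r \<le> 1" "0 \<le> r" using s unfolding r_def by (auto simp: algebra_simps)
          qed
          have xe: "x' + t *\<^sub>R (x0 - x') = xr r" unfolding x'_def xr_def r_def by (simp add: algebra_simps)
          have "\<psi> x' + 0 + z \<in> f (xr r)" using z C_0 fS[OF x'S] unfolding set_ominus_def xe by blast
          then obtain w' where w': "w' \<in> C" "\<psi> x' + z = \<psi> (xr r) + w'" using fS[OF xrS[OF r(3,2)]] by auto
          have "z \<in> C" unfolding memC
          proof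
            fix m assume m: "m \<in> M"
            have "m (\<psi> x') + m z = m (\<psi> (xr r)) + m w'" using w'(2) linear_add[OF lin[OF m]] by metis
            moreover have "m w' \<le> 0" using memC w' m by blast
            moreover have "hm m r \<le> hm m s" using s(3) m r unfolding upp_def by blast
            ultimately show "m z \<le> 0" unfolding hm_def x'_def by simp
          qed
          then show "w \<in> C" using C_cone t unfolding w cone_def by simp
        qed
        then have "closure (convex hull U) \<subseteq> C"
          by (intro closure_minimal hull_minimal C_closed C_convex) auto
        moreover have "C \<subseteq> recession (f x')"
        proof
          fix z assume z: "z \<in> C"
          have "f x' \<noteq> {}" using fS[OF x'S] C_0 by auto
          moreover have "(\<lambda>a. a + z) ` f x' \<subseteq> f x'"
          proof
            fix y assume "y \<in> (\<lambda>a. a + z) ` f x'"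
            then obtain c' where "c' \<in> C" "y = \<psi> x' + c' + z" using fS[OF x'S] by auto
            then show "y \<in> f x'" using fS[OF x'S] Cadd[OF \<open>c' \<in> C\<close> z]
              by (auto simp: add.assoc)
          qed
          ultimately show "z \<in> recession (f x')" unfolding recession_def by simp
        qed
        ultimately show ?thesis by blast
      qed
      then show False using minty ne unfolding minty_solution_def f_def by blast
    qed
  }
qed

end
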